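(* There is an absolute constant $C$ such that for all positive integers $n$, $\mathrm{sf}(\Lambda(R_0))\le 2^{0.36n^2+Cn}\,\mathrm{sf}(\Lambda(R\cup L))$.
   Context: $R_0=\{(x,y)\in[0,n]^2:0.7n\le x+y\le1.7n\}$, $R=\{(x,y)\in\mathbb{R}^2:0.7n\le x+y\le n,\ |x-y|\le0.8n\}$, $L=\{(x,y)\in\mathbb{R}^2:2\lceil0.7n\rceil\le x+y\le1.7n,\ |x-y|\le0.4n\}$. For $X\subseteq\mathbb{R}^2$, $\Lambda(X)=\mathbb{Z}^2\cap X$. $\mathrm{sf}(Y)$ is the number of sum-free subsets of a finite $Y\subset\mathbb{Z}^2$ (no $a,b,c$, not necessarily distinct, with $a+b=c$). *)

theory Defs
  imports "HOL-Analysis.Analysis"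
begin

definition R0 :: "nat \<Rightarrow> (real \<times> real) set" where
  "R0 n = {(x, y). 0 \<le> x \<and> x \<le> real n \<and> 0 \<le> y \<and> y \<le> real n \<and>
                  0.7 * real n \<le> x + y \<and> x + y \<le> 1.7 * real n}"

definition Rreg :: "nat \<Rightarrow> (real \<times> real) set" where
  "Rreg n = {(x, y). 0.7 * real n \<le> x + y \<and> x + y \<le> real n \<and> \<bar>x - y\<bar> \<le> 0.8 * real n}"

definition Lreg :: "nat \<Rightarrow> (real \<times> real) set" where
  "Lreg n = {(x, y). 2 * real_of_int \<lceil>0.7 * real n\<rceil> \<le> x + y \<and> x + y \<le> 1.7 * real n \<and>
                    \<bar>x - y\<bar> \<le> 0.4 * real n}"

definition Lambda :: "(real \<times> real) set \<Rightarrow> (int \<times> int) set" where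
  "Lambda X = {(a, b). (real_of_int a, real_of_int b) \<in> X}"

definition sum_free :: "(int \<times> int) set \<Rightarrow> bool" where
  "sum_free A \<longleftrightarrow> (\<forall>a\<in>A. \<forall>b\<in>A. \<forall>c\<in>A. a + b \<noteq> c)"

definition sf :: "(int \<times> int) set \<Rightarrow> nat" where
  "sf Y = card {A. A \<subseteq> Y \<and> sum_free A}"

end

theory Submission
  imports Defs
begin

definition T :: "nat \<Rightarrow> (nat \<times> nat) set" where "T m = {(p,q). p+q \<le> m}"
definition D :: "nat \<Rightarrow> (nat \<times> nat) set" where "D m = {(p,q). 2*p+q \<le> m}"

lemma T_fin: "finite (T m)"
proof -
  have "T m \<subseteq> {0..m} \<times> {0..m}" unfolding T_def by auto
  then show ?thesis by (rule finite_subset) auto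
qed

lemma T_mono: "m \<le> m' \<Longrightarrow> T m \<subseteq> T m'"
  unfolding T_def by auto

lemma T_card: "2 * card (T m) = (m+1)*(m+2)"
proof (induction m)
  case 0
  have "T 0 = {(0,0)}" unfolding T_def by auto
  then show ?case by simp
next
  case (Suc m)
  have eq: "T (Suc m) = T m \<union> (\<lambda>p. (p, Suc m - p)) ` {0..Suc m}"
    unfolding T_def by (auto simp: image_iff)
  have disj: "T m \<inter> (\<lambda>p. (p, Suc m - p)) ` {0..Suc m} = {}"
    unfolding T_def by auto
  have inj: "inj_on (\<lambda>p. (p, Suc m - p)) {0..Suc m}" by (auto simp: inj_on_def)
  have "card (T (Suc m)) = card (T m) + (Suc m + 1)"
    unfolding eq using disj T_fin card_image[OF inj] by (simp add: card_Un_disjoint)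
  then show ?case using Suc.IH by simp
qed

lemma D_fin: "finite (D m)"
proof -
  have "D m \<subseteq> {0..m} \<times> {0..m}" unfolding D_def by auto
  then show ?thesis by (rule finite_subset) auto
qed

lemma D_card: "4 * card (D m) \<le> (m+2)*(m+3)"
proof -
  let ?f = "\<lambda>(p::nat,q::nat). (p, p+q)"
  let ?g = "\<lambda>(p::nat,q::nat). (p+q+1, p)"
  have i1: "inj_on ?f (D m)" by (auto simp: inj_on_def)
  have i2: "inj_on ?g (D m)" by (auto simp: inj_on_def)
  have sub: "?f ` D m \<union> ?g ` D m \<subseteq> T (m+1)" unfolding D_def T_def by auto
  have disj: "?f ` D m \<inter> ?g ` D m = {}" by auto
  have "card (?f ` D m \<union> ?g ` D m) = card (D m) + card (D m)"
    using disj D_fin card_image[OF i1] card_image[OF i2] by (simp add: card_Un_disjoint)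
  moreover have "card (?f ` D m \<union> ?g ` D m) \<le> card (T (m+1))"
    using sub T_fin by (rule card_mono[rotated])
  ultimately have "2 * card (D m) \<le> card (T (m+1))" by simp
  then have "4 * card (D m) \<le> 2 * card (T (m+1))" by simp
  then show ?thesis using T_card[of "m+1"] by (simp add: algebra_simps)
qed

lemma sum_free_mono: "sum_free A \<Longrightarrow> B \<subseteq> A \<Longrightarrow> sum_free B"
  unfolding sum_free_def by blast

lemma sf_split:
  assumes "finite Y"
  shows "sf Y \<le> sf (Y \<inter> Z) * 2 ^ card (Y - Z)"
proof -
  let ?h = "\<lambda>A. (A \<inter> Z, A - Z)"
  have inj: "inj_on ?h {A. A \<subseteq> Y \<and> sum_free A}"
    by (auto simp: inj_on_def)
  have sub: "?h ` {A. A \<subseteq> Y \<and> sum_free A} \<subseteq> {B. B \<subseteq> Y \<inter> Z \<and> sum_free B} \<times> Pow (Y - Z)"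
    using sum_free_mono by auto
  have fin1: "finite {B. B \<subseteq> Y \<inter> Z \<and> sum_free B}"
    by (rule finite_subset[of _ "Pow (Y \<inter> Z)"]) (use assms in auto)
  have fin: "finite ({B. B \<subseteq> Y \<inter> Z \<and> sum_free B} \<times> Pow (Y - Z))"
    using fin1 assms by auto
  have "sf Y \<le> card ({B. B \<subseteq> Y \<inter> Z \<and> sum_free B} \<times> Pow (Y - Z))"
    unfolding sf_def using card_inj_on_le[OF inj sub fin] .
  also have "\<dots> = sf (Y \<inter> Z) * 2 ^ card (Y - Z)"
    unfolding sf_def using assms by (simp add: card_cartesian_product card_Pow)
  finally show ?thesis .
qed

lemma sf_mono:
  assumes "finite Z" "Y \<subseteq> Z"
  shows "sf Y \<le> sf Z"
  unfolding sf_def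
  by (rule card_mono) (use assms in \<open>auto intro: finite_subset[of _ "Pow Z"]\<close>)


lemma to_D:
  assumes "0 \<le> p" "0 \<le> q" "real_of_int (2*p+q) < 0.2*real n"
  shows "(nat p, nat q) \<in> D (nat \<lfloor>0.2*real n\<rfloor>)"
proof -
  have "2*p+q \<le> \<lfloor>0.2*real n\<rfloor>" using assms(3) by (simp add: le_floor_iff)
  then show ?thesis using assms unfolding D_def by auto
qed

lemma to_T:
  assumes "0 \<le> p" "0 \<le> q" "p + q \<le> int m"
  shows "(nat p, nat q) \<in> T m"
  using assms unfolding T_def by auto

lemma notin_T:
  assumes "0 \<le> p" "0 \<le> q" "p + q > int m"
  shows "(nat p, nat q) \<notin> T m"
  using assms unfolding T_def by auto

lemma count_main:
  assumes n: "n > 0"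
  shows "real (card (Lambda (R0 n) - Lambda (Rreg n \<union> Lreg n))) \<le> 0.36 * (real n)\<^sup>2 + 9 * real n"
proof -
  define c where "c = \<lceil>0.7 * real n\<rceil>"
  have c1: "0.7 * real n \<le> real_of_int c" unfolding c_def by (rule le_of_int_ceiling)
  have c2: "real_of_int c \<le> 0.7 * real n + 1" unfolding c_def by (rule of_int_ceiling_le_add_one)
  define m1 where "m1 = nat \<lfloor>0.2*real n\<rfloor>"
  define k where "k = nat (2 * int n - 2 * c)"
  have "0.7 * real n \<le> real_of_int (int n)" by simp
  then have cn: "c \<le> int n" unfolding c_def by (rule ceiling_le)
  have rn: "real n > 0" using n by simp
  then have "real_of_int c > 0" using c1 by linarith
  then have c0: "c \<ge> 1" by simp
  have e1: "real_of_int (2*c) = 2 * real_of_int c" by simp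
  have e2: "real_of_int (int n) = real n" by simp
  have "real_of_int (2*c) > real_of_int (int n)" using e1 e2 c1 rn by linarith
  then have c3: "2*c > int n" by (simp only: of_int_less_iff)
  have "2*int n - 2*c \<le> int n - 1" using c3 by linarith
  then have kn: "k \<le> n - 1" unfolding k_def using n by (simp add: nat_le_iff of_nat_diff)
  have "real k = real_of_int (2*int n - 2*c)" unfolding k_def using cn by simp
  moreover have "real_of_int (2*int n - 2*c) = 2 * real n - 2 * real_of_int c" by simp
  ultimately have kr: "real k \<ge> 0.6 * real n - 2" using c2 by linarith
  define S1 where "S1 = {(a::int,b::int). 0 \<le> b \<and> a+b \<le> int n \<and> real_of_int (a-b) > 0.8*real n}"
  define S2 where "S2 = {(a::int,b::int). 0 \<le> a \<and> a+b \<le> int n \<and> real_of_int (b-a) > 0.8*real n}"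
  define S3 where "S3 = {(a::int,b::int). a \<le> int n \<and> b \<le> int n \<and> int n < a+b \<and> a+b < 2*c}"
  define S4 where "S4 = {(a::int,b::int). a \<le> int n \<and> 2*c \<le> a+b \<and> real_of_int (a-b) > 0.4*real n}"
  define S5 where "S5 = {(a::int,b::int). b \<le> int n \<and> 2*c \<le> a+b \<and> real_of_int (b-a) > 0.4*real n}"
  have cover: "Lambda (R0 n) - Lambda (Rreg n \<union> Lreg n) \<subseteq> S1 \<union> S2 \<union> S3 \<union> S4 \<union> S5"
  proof
    fix x assume x: "x \<in> Lambda (R0 n) - Lambda (Rreg n \<union> Lreg n)"
    obtain a b where ab: "x = (a,b)" by (cases x)
    have h: "0 \<le> a" "a \<le> int n" "0 \<le> b" "b \<le> int n"
      "0.7 * real n \<le> real_of_int a + real_of_int b" "real_of_int a + real_of_int b \<le> 1.7 * real n"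
      "\<not> (0.7 * real n \<le> real_of_int a + real_of_int b \<and> real_of_int a + real_of_int b \<le> real n
           \<and> \<bar>real_of_int a - real_of_int b\<bar> \<le> 0.8 * real n)"
      "\<not> (2 * real_of_int c \<le> real_of_int a + real_of_int b \<and> real_of_int a + real_of_int b \<le> 1.7 * real n
           \<and> \<bar>real_of_int a - real_of_int b\<bar> \<le> 0.4 * real n)"
      using x unfolding ab Lambda_def R0_def Rreg_def Lreg_def c_def by auto
    show "x \<in> S1 \<union> S2 \<union> S3 \<union> S4 \<union> S5"
    proof (cases "a + b \<le> int n")
      case True
      then have "real_of_int a + real_of_int b \<le> real n"
        by (metis of_int_add of_int_of_nat_eq of_int_le_iff)
      then have "\<bar>real_of_int a - real_of_int b\<bar> > 0.8 * real n" using h(5,7) by linarith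
      then have "real_of_int (a-b) > 0.8 * real n \<or> real_of_int (b-a) > 0.8 * real n" by linarith
      then have "(a,b) \<in> S1 \<or> (a,b) \<in> S2" using True h(1,3) unfolding S1_def S2_def by auto
      then show ?thesis unfolding ab by blast
    next
      case False
      show ?thesis
      proof (cases "a + b < 2 * c")
        case True
        then have "(a,b) \<in> S3" using False h(2,4) unfolding S3_def by auto
        then show ?thesis unfolding ab by blast
      next
        case F2: False
        then have "2 * real_of_int c \<le> real_of_int a + real_of_int b"
          by (metis not_less of_int_add of_int_le_iff of_int_mult of_int_numeral)
        then have "\<bar>real_of_int a - real_of_int b\<bar> > 0.4 * real n" using h(6,8) by linarith
        then have "real_of_int (a-b) > 0.4 * real n \<or> real_of_int (b-a) > 0.4 * real n" by linarith
        then have "(a,b) \<in> S4 \<or> (a,b) \<in> S5" using F2 h(2,4) unfolding S4_def S5_def by auto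
        then show ?thesis unfolding ab by blast
      qed
    qed
  qed
  have D1: "card S1 \<le> card (D m1)"
  proof (rule card_inj_on_le[OF _ _ D_fin])
    show "inj_on (\<lambda>(a,b). (nat b, nat (int n - a - b))) S1"
      unfolding S1_def inj_on_def by auto
    show "(\<lambda>(a,b). (nat b, nat (int n - a - b))) ` S1 \<subseteq> D m1"
    proof clarify
      fix a b assume "(a,b) \<in> S1"
      then have "0 \<le> b" "0 \<le> int n - a - b" "real_of_int (2*b + (int n - a - b)) < 0.2 * real n"
        unfolding S1_def by auto
      then show "(nat b, nat (int n - a - b)) \<in> D m1" unfolding m1_def by (rule to_D)
    qed
  qed
  have D2: "card S2 \<le> card (D m1)"
  proof (rule card_inj_on_le[OF _ _ D_fin])
    show "inj_on (\<lambda>(a,b). (nat a, nat (int n - a - b))) S2"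
      unfolding S2_def inj_on_def by auto
    show "(\<lambda>(a,b). (nat a, nat (int n - a - b))) ` S2 \<subseteq> D m1"
    proof clarify
      fix a b assume "(a,b) \<in> S2"
      then have "0 \<le> a" "0 \<le> int n - a - b" "real_of_int (2*a + (int n - a - b)) < 0.2 * real n"
        unfolding S2_def by auto
      then show "(nat a, nat (int n - a - b)) \<in> D m1" unfolding m1_def by (rule to_D)
    qed
  qed
  have D4: "card S4 \<le> card (D m1)"
  proof (rule card_inj_on_le[OF _ _ D_fin])
    show "inj_on (\<lambda>(a,b). (nat (int n - a), nat (a + b - 2*c))) S4"
      unfolding S4_def inj_on_def by auto
    show "(\<lambda>(a,b). (nat (int n - a), nat (a + b - 2*c))) ` S4 \<subseteq> D m1"
    proof clarify
      fix a b assume ab: "(a,b) \<in> S4"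
      have "real_of_int (2*(int n - a) + (a + b - 2*c)) = 2 * real n - real_of_int (a - b) - 2 * real_of_int c"
        by simp
      then have "0 \<le> int n - a" "0 \<le> a + b - 2*c" "real_of_int (2*(int n - a) + (a + b - 2*c)) < 0.2 * real n"
        using ab c1 unfolding S4_def by auto
      then show "(nat (int n - a), nat (a + b - 2*c)) \<in> D m1" unfolding m1_def by (rule to_D)
    qed
  qed
  have D5: "card S5 \<le> card (D m1)"
  proof (rule card_inj_on_le[OF _ _ D_fin])
    show "inj_on (\<lambda>(a,b). (nat (int n - b), nat (a + b - 2*c))) S5"
      unfolding S5_def inj_on_def by auto
    show "(\<lambda>(a,b). (nat (int n - b), nat (a + b - 2*c))) ` S5 \<subseteq> D m1"
    proof clarify
      fix a b assume ab: "(a,b) \<in> S5"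
      have "real_of_int (2*(int n - b) + (a + b - 2*c)) = 2 * real n - real_of_int (b - a) - 2 * real_of_int c"
        by simp
      then have "0 \<le> int n - b" "0 \<le> a + b - 2*c" "real_of_int (2*(int n - b) + (a + b - 2*c)) < 0.2 * real n"
        using ab c1 unfolding S5_def by auto
      then show "(nat (int n - b), nat (a + b - 2*c)) \<in> D m1" unfolding m1_def by (rule to_D)
    qed
  qed
  have D3: "card S3 \<le> card (T (n-1) - T k)"
  proof (rule card_inj_on_le)
    show "inj_on (\<lambda>(a,b). (nat (int n - a), nat (int n - b))) S3"
      unfolding S3_def inj_on_def by auto
    show "finite (T (n-1) - T k)" using T_fin by simp
    show "(\<lambda>(a,b). (nat (int n - a), nat (int n - b))) ` S3 \<subseteq> T (n-1) - T k"
    proof clarify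
      fix a b assume ab: "(a,b) \<in> S3"
      have 1: "0 \<le> int n - a" "0 \<le> int n - b" using ab unfolding S3_def by auto
      have 2: "(int n - a) + (int n - b) \<le> int (n-1)" using ab n unfolding S3_def by auto
      have 3: "(int n - a) + (int n - b) > int k" using ab cn unfolding S3_def k_def by auto
      show "(nat (int n - a), nat (int n - b)) \<in> T (n-1) - T k"
        using to_T[OF 1 2] notin_T[OF 1 3] by simp
    qed
  qed
  have T3: "2 * card (T (n-1) - T k) = n * (n+1) - (k+1)*(k+2)"
  proof -
    have "card (T (n-1) - T k) = card (T (n-1)) - card (T k)"
      using T_mono[OF kn] T_fin by (simp add: card_Diff_subset)
    moreover have "card (T k) \<le> card (T (n-1))" using T_mono[OF kn] T_fin by (simp add: card_mono)
    ultimately show ?thesis using T_card[of "n-1"] T_card[of k] n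
      by (simp add: diff_mult_distrib2)
  qed
  have le_sum: "card (Lambda (R0 n) - Lambda (Rreg n \<union> Lreg n)) \<le>
      card S1 + card S2 + card S3 + card S4 + card S5"
  proof -
    have "card (Lambda (R0 n) - Lambda (Rreg n \<union> Lreg n)) \<le> card (S1 \<union> S2 \<union> S3 \<union> S4 \<union> S5)"
    proof (rule card_mono[OF _ cover])
      let ?B = "{-int n..2*int n} \<times> {-int n..2*int n}"
      have "S1 \<subseteq> ?B" unfolding S1_def by auto
      moreover have "S2 \<subseteq> ?B" unfolding S2_def by auto
      moreover have "S3 \<subseteq> ?B" unfolding S3_def by auto
      moreover have "S4 \<subseteq> ?B"
      proof
        fix x assume xS: "x \<in> S4"
        obtain a b where ab: "x = (a,b)" by (cases x)
        from xS have h: "a \<le> int n" "2*c \<le> a+b" "real_of_int (a-b) > 0.4*real n" unfolding S4_def ab by auto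
        then have "real_of_int (a-b) > 0" using rn by linarith
        then have "a-b > 0" by simp
        then show "x \<in> ?B" using h c0 ab by auto
      qed
      moreover have "S5 \<subseteq> ?B"
      proof
        fix x assume xS: "x \<in> S5"
        obtain a b where ab: "x = (a,b)" by (cases x)
        from xS have h: "b \<le> int n" "2*c \<le> a+b" "real_of_int (b-a) > 0.4*real n" unfolding S5_def ab by auto
        then have "real_of_int (b-a) > 0" using rn by linarith
        then have "b-a > 0" by simp
        then show "x \<in> ?B" using h c0 ab by auto
      qed
      ultimately have "S1 \<union> S2 \<union> S3 \<union> S4 \<union> S5 \<subseteq> ?B" by blast
      then show "finite (S1 \<union> S2 \<union> S3 \<union> S4 \<union> S5)" by (rule finite_subset) simp
    qed
    also have "\<dots> \<le> card S1 + card S2 + card S3 + card S4 + card S5"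
      by (meson card_Un_le add_le_mono le_refl order_trans)
    finally show ?thesis .
  qed
  have Dm: "4 * real (card (D m1)) \<le> (0.2 * real n + 2) * (0.2 * real n + 3)"
  proof -
    have "real m1 = real_of_int \<lfloor>0.2*real n\<rfloor>" unfolding m1_def by simp
    then have "real m1 \<le> 0.2 * real n" by linarith
    then have "(real m1 + 2) * (real m1 + 3) \<le> (0.2 * real n + 2) * (0.2 * real n + 3)"
      by (intro mult_mono) auto
    moreover have "real ((m1+2)*(m1+3)) = (real m1 + 2) * (real m1 + 3)" by (simp add: algebra_simps)
    ultimately have "real ((m1+2)*(m1+3)) \<le> (0.2 * real n + 2) * (0.2 * real n + 3)"
      by linarith
    moreover have "real (4 * card (D m1)) \<le> real ((m1+2)*(m1+3))" using D_card by (simp only: of_nat_le_iff)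
    ultimately show ?thesis by simp
  qed
  have Tr: "2 * real (card (T (n-1) - T k)) \<le> real n * (real n + 1) - (0.6 * real n - 1)^2"
  proof -
    have kk: "(k+1)*(k+2) \<le> n * (n+1)" using kn n by (intro mult_mono) auto
    have "real (2 * card (T (n-1) - T k)) = real (n * (n+1)) - real ((k+1)*(k+2))"
      using T3 kk by (simp add: of_nat_diff)
    then have eq: "2 * real (card (T (n-1) - T k)) = real n * (real n + 1) - (real k + 1) * (real k + 2)"
      by (simp add: algebra_simps)
    have "real k \<ge> 0" by simp
    then have "\<bar>0.6 * real n - 1\<bar> \<le> real k + 1" using kr rn unfolding abs_le_iff by linarith
    then have "\<bar>0.6 * real n - 1\<bar>^2 \<le> (real k + 1)^2" by (rule power_mono) simp
    also have "\<dots> \<le> (real k + 1) * (real k + 2)" by (simp add: power2_eq_square)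
    finally have "(0.6 * real n - 1)^2 \<le> (real k + 1) * (real k + 2)" by simp
    then show ?thesis using eq by linarith
  qed
  have S: "real (card (Lambda (R0 n) - Lambda (Rreg n \<union> Lreg n))) \<le>
      4 * real (card (D m1)) + real (card (T (n-1) - T k))"
  proof -
    have "card (Lambda (R0 n) - Lambda (Rreg n \<union> Lreg n)) \<le> 4 * card (D m1) + card (T (n-1) - T k)"
      using le_sum D1 D2 D3 D4 D5 by linarith
    then have "real (card (Lambda (R0 n) - Lambda (Rreg n \<union> Lreg n))) \<le> real (4 * card (D m1) + card (T (n-1) - T k))"
      by (simp only: of_nat_le_iff)
    then show ?thesis by simp
  qed
  have x1: "(0.2*real n+2)*(0.2*real n+3) = 0.04*(real n)^2 + real n + 6"
    by (simp add: algebra_simps power2_eq_square)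
  have x2: "(0.6 * real n - 1)^2 = 0.36*(real n)^2 - 1.2 * real n + 1"
    by (simp add: algebra_simps power2_eq_square)
  have x3: "real n * (real n + 1) = (real n)^2 + real n"
    by (simp add: algebra_simps power2_eq_square)
  have "real n \<ge> 1" using n by simp
  moreover have Dm': "4 * real (card (D m1)) \<le> (1/25)*(real n)^2 + real n + 6"
    using Dm x1 by simp
  moreover have Tr': "2 * real (card (T (n-1) - T k)) \<le> (real n)^2 + real n - ((9/25)*(real n)^2 - (6/5) * real n + 1)"
    using Tr x2 x3 by simp
  ultimately have "real (card (Lambda (R0 n) - Lambda (Rreg n \<union> Lreg n))) \<le> (9/25) * (real n)\<^sup>2 + 9 * real n"
    using S by linarith
  then show ?thesis by simp
qed


theorem mainTheorem7:
  shows "\<exists>C::real. \<forall>n::nat. n > 0 \<longrightarrow>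
    real (sf (Lambda (R0 n))) \<le>
      2 powr (0.36 * (real n)\<^sup>2 + C * real n) * real (sf (Lambda (Rreg n \<union> Lreg n)))"
proof (intro exI allI impI)
  fix n :: nat assume n: "n > 0"
  let ?Y = "Lambda (R0 n)" and ?Z = "Lambda (Rreg n \<union> Lreg n)"
  let ?B = "{-int n..2*int n} \<times> {-int n..2*int n}"
  have finY: "finite ?Y"
  proof (rule finite_subset[of _ ?B])
    show "?Y \<subseteq> ?B" unfolding Lambda_def R0_def by auto
  qed simp
  have finZ: "finite ?Z"
  proof (rule finite_subset[of _ ?B])
    show "?Z \<subseteq> ?B"
    proof
      fix x assume x: "x \<in> ?Z"
      obtain a b where ab: "x = (a,b)" by (cases x)
      have c: "0 \<le> real_of_int \<lceil>0.7 * real n\<rceil>" by simp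
      have "(0.7 * real n \<le> real_of_int a + real_of_int b \<and> real_of_int a + real_of_int b \<le> real n
           \<and> \<bar>real_of_int a - real_of_int b\<bar> \<le> 0.8 * real n) \<or>
           (2 * real_of_int \<lceil>0.7 * real n\<rceil> \<le> real_of_int a + real_of_int b \<and> real_of_int a + real_of_int b \<le> 1.7 * real n
           \<and> \<bar>real_of_int a - real_of_int b\<bar> \<le> 0.4 * real n)"
        using x unfolding ab Lambda_def Rreg_def Lreg_def by auto
      then have "- real n \<le> real_of_int a \<and> real_of_int a \<le> 2 * real n \<and> - real n \<le> real_of_int b \<and> real_of_int b \<le> 2 * real n"
        using c unfolding abs_le_iff by linarith
      then have "- int n \<le> a \<and> a \<le> 2 * int n \<and> - int n \<le> b \<and> b \<le> 2 * int n"
        by linarith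
      then show "x \<in> ?B" unfolding ab by auto
    qed
  qed simp
  have "sf ?Y \<le> sf (?Y \<inter> ?Z) * 2 ^ card (?Y - ?Z)" using finY by (rule sf_split)
  also have "\<dots> \<le> sf ?Z * 2 ^ card (?Y - ?Z)" using sf_mono[OF finZ, of "?Y \<inter> ?Z"] by simp
  finally have "real (sf ?Y) \<le> real (sf ?Z) * 2 ^ card (?Y - ?Z)"
    by (metis of_nat_le_iff of_nat_mult of_nat_numeral of_nat_power)
  also have "\<dots> = real (sf ?Z) * 2 powr real (card (?Y - ?Z))" by (simp add: powr_realpow)
  also have "\<dots> \<le> real (sf ?Z) * 2 powr (0.36 * (real n)\<^sup>2 + 9 * real n)"
    using count_main[OF n] by (intro mult_left_mono powr_mono) auto
  finally show "real (sf ?Y) \<le> 2 powr (0.36 * (real n)\<^sup>2 + 9 * real n) * real (sf ?Z)"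
    by (simp add: mult.commute)
qed

end
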